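(* Let $n\ge2$, $k\in\{1,\dots,n\}$ and let $W_1,\dots,W_n$ be the Pauli strings on $n-1$ qubits defined in the context. Then for every $m\in\{1,\dots,n-1\}$, the operator $G_m=iW_{m+1}W_m$ is, up to sign, a Pauli string acting nontrivially on at most two qubits, and these lie among the adjacent qubits $m$ and $m+1$.
   Context: $X_j,Y_j,Z_j$ are Pauli operators on qubit $j$ of an $(n-1)$-qubit system; empty products of $Z$'s are the identity. For $k\ne n$: for $1\le j<k$, $W_j=Y_jZ_{j+1}\cdots Z_{k-1}Y_k$; $W_k=Z_k$; for $k<j<n$, $W_j=X_kZ_{k+1}\cdots Z_{j-1}X_j$; and $W_n=X_kZ_{k+1}\cdots Z_{n-1}$. For $k=n$: for $1\le j<n$, $W_j=-Z_1Z_2\cdots Z_{j-1}X_j$; $W_n=\prod_{j=1}^{n-1}Z_j$. *)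

theory Defs
  imports Complex_Main
begin

datatype pauli = PI | PX | PY | PZ

text \<open>2x2 Pauli matrices, rows/columns indexed by the computational basis
  False = |0>, True = |1>.\<close>
fun pmat :: "pauli \<Rightarrow> bool \<Rightarrow> bool \<Rightarrow> complex" where
  "pmat PI a b = (if a = b then 1 else 0)"
| "pmat PX a b = (if a \<noteq> b then 1 else 0)"
| "pmat PY a b = (if a = b then 0 else if a then \<i> else - \<i>)"
| "pmat PZ a b = (if a = b then (if a then -1 else 1) else 0)"

text \<open>Operators on an N-qubit system (qubits 1..N) as complex matrices indexed
  by computational basis states; a basis state is a bit assignment supported on {1..N}.\<close>
type_synonym qop = "(nat \<Rightarrow> bool) \<Rightarrow> (nat \<Rightarrow> bool) \<Rightarrow> complex"

definition basis :: "nat \<Rightarrow> (nat \<Rightarrow> bool) set" where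
  "basis N = {x. \<forall>j. x j \<longrightarrow> j \<in> {1..N}}"

definition op_mult :: "nat \<Rightarrow> qop \<Rightarrow> qop \<Rightarrow> qop" where
  "op_mult N A B = (\<lambda>x y. \<Sum>z\<in>basis N. A x z * B z y)"

definition op_scale :: "complex \<Rightarrow> qop \<Rightarrow> qop" where
  "op_scale c A = (\<lambda>x y. c * A x y)"

definition pstring :: "nat \<Rightarrow> (nat \<Rightarrow> pauli) \<Rightarrow> qop" where
  "pstring N P = (\<lambda>x y. \<Prod>j\<in>{1..N}. pmat (P j) (x j) (y j))"

definition Wstr :: "nat \<Rightarrow> nat \<Rightarrow> nat \<Rightarrow> (nat \<Rightarrow> pauli)" where
  "Wstr n k j =
    (if k \<noteq> n then
       (if j < k then (\<lambda>i. if i = j \<or> i = k then PY else if j < i \<and> i < k then PZ else PI)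
        else if j = k then (\<lambda>i. if i = k then PZ else PI)
        else if j < n then (\<lambda>i. if i = k \<or> i = j then PX else if k < i \<and> i < j then PZ else PI)
        else (\<lambda>i. if i = k then PX else if k < i \<and> i < n then PZ else PI))
     else
       (if j < n then (\<lambda>i. if 1 \<le> i \<and> i < j then PZ else if i = j then PX else PI)
        else (\<lambda>i. if 1 \<le> i \<and> i < n then PZ else PI)))"

definition Wsign :: "nat \<Rightarrow> nat \<Rightarrow> nat \<Rightarrow> complex" where
  "Wsign n k j = (if k = n \<and> j < n then -1 else 1)"

definition W :: "nat \<Rightarrow> nat \<Rightarrow> nat \<Rightarrow> qop" where
  "W n k j = op_scale (Wsign n k j) (pstring (n - 1) (Wstr n k j))"

end

theory Submission
  imports Defs
begin

fun pmul :: "pauli \<Rightarrow> pauli \<Rightarrow> pauli" where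
  "pmul PI b = b"
| "pmul a PI = a"
| "pmul PX PX = PI" | "pmul PY PY = PI" | "pmul PZ PZ = PI"
| "pmul PX PY = PZ" | "pmul PY PX = PZ"
| "pmul PY PZ = PX" | "pmul PZ PY = PX"
| "pmul PZ PX = PY" | "pmul PX PZ = PY"

fun pph :: "pauli \<Rightarrow> pauli \<Rightarrow> complex" where
  "pph PX PY = \<i>" | "pph PY PX = - \<i>"
| "pph PY PZ = \<i>" | "pph PZ PY = - \<i>"
| "pph PZ PX = \<i>" | "pph PX PZ = - \<i>"
| "pph a b = 1"

lemma site: "pmat a x False * pmat c False y + pmat a x True * pmat c True y
   = pph a c * pmat (pmul a c) x y"
  by (cases a; cases c; cases x; cases y; simp)

lemma basis_Suc: "basis (Suc N) = basis N \<union> (\<lambda>z. z(Suc N := True)) ` basis N"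
proof -
  have "z \<in> basis N \<union> (\<lambda>z. z(Suc N := True)) ` basis N" if "z \<in> basis (Suc N)" for z
  proof (cases "z (Suc N)")
    case True
    then have "z = (z(Suc N := False))(Suc N := True)" using True by (simp add: fun_eq_iff)
    moreover have "z(Suc N := False) \<in> basis N" using that
      by (auto simp: basis_def le_Suc_eq)
    ultimately show ?thesis by blast
  next
    case False
    then show ?thesis using that by (auto simp: basis_def le_Suc_eq)
  qed
  moreover have "basis N \<union> (\<lambda>z. z(Suc N := True)) ` basis N \<subseteq> basis (Suc N)"
  proof
    fix w assume "w \<in> basis N \<union> (\<lambda>z. z(Suc N := True)) ` basis N"
    then show "w \<in> basis (Suc N)"
    proof
      assume "w \<in> basis N" then show ?thesis by (auto simp: basis_def)
    next
      assume "w \<in> (\<lambda>z. z(Suc N := True)) ` basis N"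
      then obtain z where z: "z \<in> basis N" "w = z(Suc N := True)" by blast
      show ?thesis unfolding basis_def mem_Collect_eq
      proof (intro allI impI)
        fix j assume "w j"
        then show "j \<in> {1..Suc N}"
          using z unfolding basis_def by (cases "j = Suc N") auto
      qed
    qed
  qed
  ultimately show ?thesis by blast
qed

lemma basis_finite: "finite (basis N)"
proof (induction N)
  case 0
  have "basis 0 = {\<lambda>_. False}" by (auto simp: basis_def)
  then show ?case by simp
next
  case (Suc N)
  then show ?case by (simp add: basis_Suc)
qed

lemma sum_prod_basis:
  fixes F :: "nat \<Rightarrow> bool \<Rightarrow> complex"
  shows "(\<Sum>z\<in>basis N. \<Prod>j\<in>{1..N}. F j (z j)) = (\<Prod>j\<in>{1..N}. F j False + F j True)"
proof (induction N)
  case 0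
  have "basis 0 = {\<lambda>_. False}" by (auto simp: basis_def)
  then show ?case by simp
next
  case (Suc N)
  have disj: "basis N \<inter> (\<lambda>z. z(Suc N := True)) ` basis N = {}"
  proof (rule ccontr)
    assume "basis N \<inter> (\<lambda>z. z(Suc N := True)) ` basis N \<noteq> {}"
    then obtain z where "z(Suc N := True) \<in> basis N" by blast
    then have "Suc N \<in> {1..N}" unfolding basis_def mem_Collect_eq
    proof -
      assume h: "\<forall>j. (z(Suc N := True)) j \<longrightarrow> j \<in> {1..N}"
      show ?thesis using spec[OF h, of "Suc N"] by simp
    qed
    then show False by simp
  qed
  have inj: "inj_on (\<lambda>z. z(Suc N := True)) (basis N)"
  proof (rule inj_onI)
    fix z1 z2 assume z: "z1 \<in> basis N" "z2 \<in> basis N" "z1(Suc N := True) = z2(Suc N := True)"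
    have "z1 j = z2 j" for j
    proof (cases "j = Suc N")
      case True
      then show ?thesis using z(1,2) unfolding basis_def by auto
    next
      case False
      then show ?thesis using fun_cong[OF z(3), of j] by simp
    qed
    then show "z1 = z2" by blast
  qed
  have split: "{1..Suc N} = insert (Suc N) {1..N}" by auto
  have A: "(\<Prod>j\<in>{1..Suc N}. F j (z j)) = (\<Prod>j\<in>{1..N}. F j (z j)) * F (Suc N) False"
    if "z \<in> basis N" for z
  proof -
    have "z (Suc N) = False" using that by (auto simp: basis_def)
    then show ?thesis by (simp add: split mult.commute)
  qed
  have B: "(\<Prod>j\<in>{1..Suc N}. F j ((z(Suc N := True)) j)) = (\<Prod>j\<in>{1..N}. F j (z j)) * F (Suc N) True"
    for z
  proof -
    have "(\<Prod>j\<in>{1..N}. F j ((z(Suc N := True)) j)) = (\<Prod>j\<in>{1..N}. F j (z j))"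
      by (rule prod.cong) auto
    then show ?thesis by (simp add: split mult.commute)
  qed
  have "(\<Sum>z\<in>basis (Suc N). \<Prod>j\<in>{1..Suc N}. F j (z j))
     = (\<Sum>z\<in>basis N. \<Prod>j\<in>{1..Suc N}. F j (z j))
       + (\<Sum>z\<in>(\<lambda>z. z(Suc N := True)) ` basis N. \<Prod>j\<in>{1..Suc N}. F j (z j))"
    unfolding basis_Suc by (rule sum.union_disjoint) (auto simp: basis_finite disj)
  also have "\<dots> = (\<Sum>z\<in>basis N. (\<Prod>j\<in>{1..N}. F j (z j)) * F (Suc N) False)
       + (\<Sum>z\<in>basis N. (\<Prod>j\<in>{1..N}. F j (z j)) * F (Suc N) True)"
  proof -
    have C: "(\<Sum>z\<in>basis N. \<Prod>j\<in>{1..Suc N}. F j (z j))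
       = (\<Sum>z\<in>basis N. (\<Prod>j\<in>{1..N}. F j (z j)) * F (Suc N) False)"
      by (rule sum.cong[OF refl]) (rule A)
    show ?thesis unfolding C by (simp add: sum.reindex[OF inj] B)
  qed
  also have "\<dots> = (\<Prod>j\<in>{1..N}. F j False + F j True) * (F (Suc N) False + F (Suc N) True)"
  proof -
    have "(\<Sum>z\<in>basis N. (\<Prod>j\<in>{1..N}. F j (z j)) * F (Suc N) False)
       + (\<Sum>z\<in>basis N. (\<Prod>j\<in>{1..N}. F j (z j)) * F (Suc N) True)
       = (\<Sum>z\<in>basis N. (\<Prod>j\<in>{1..N}. F j (z j))) * F (Suc N) False
       + (\<Sum>z\<in>basis N. (\<Prod>j\<in>{1..N}. F j (z j))) * F (Suc N) True"
      by (simp only: sum_distrib_right)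
    also have "\<dots> = (\<Prod>j\<in>{1..N}. F j False + F j True) * (F (Suc N) False + F (Suc N) True)"
      unfolding Suc.IH by (simp only: distrib_left)
    finally show ?thesis .
  qed
  also have "\<dots> = (\<Prod>j\<in>{1..Suc N}. F j False + F j True)" by (simp add: split mult.commute)
  finally show ?case .
qed

lemma mult_pstring:
  "op_mult N (pstring N P) (pstring N Q) x y
   = (\<Prod>j\<in>{1..N}. pph (P j) (Q j)) * pstring N (\<lambda>j. pmul (P j) (Q j)) x y"
proof -
  have "op_mult N (pstring N P) (pstring N Q) x y
      = (\<Sum>z\<in>basis N. \<Prod>j\<in>{1..N}. pmat (P j) (x j) (z j) * pmat (Q j) (z j) (y j))"
    unfolding op_mult_def pstring_def by (simp add: prod.distrib)
  also have "\<dots> = (\<Prod>j\<in>{1..N}. pph (P j) (Q j) * pmat (pmul (P j) (Q j)) (x j) (y j))"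
    by (subst sum_prod_basis) (simp add: site)
  finally show ?thesis unfolding pstring_def by (simp add: prod.distrib)
qed

theorem lemma4:
  fixes n k m :: nat
  assumes "n \<ge> 2" and "k \<in> {1..n}" and "m \<in> {1..n-1}"
  shows "\<exists>(P :: nat \<Rightarrow> pauli) (s :: complex). (s = 1 \<or> s = -1)
           \<and> (\<forall>i. i \<notin> {m, m+1} \<longrightarrow> P i = PI)
           \<and> (\<forall>x\<in>basis (n-1). \<forall>y\<in>basis (n-1).
                op_mult (n-1) (op_scale \<i> (W n k (m+1))) (W n k m) x y
                  = s * pstring (n-1) P x y)"
proof -
  define A where "A = Wstr n k (m+1)"
  define B where "B = Wstr n k m"
  define N where "N = n - 1"
  have out: "pmul (A j) (B j) = PI \<and> pph (A j) (B j) = 1" if "j \<notin> {m, m+1}" for j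
    using that assms unfolding A_def B_def Wstr_def by auto
  define s where "s = \<i> * Wsign n k (m+1) * Wsign n k m *
     (if m + 1 \<le> N then pph (A m) (B m) * pph (A (m+1)) (B (m+1)) else pph (A m) (B m))"
  define P where "P = (\<lambda>j. if j \<in> {m, m+1} then pmul (A j) (B j) else PI)"
  have prodph: "(\<Prod>j\<in>{1..N}. pph (A j) (B j)) =
     (if m + 1 \<le> N then pph (A m) (B m) * pph (A (m+1)) (B (m+1)) else pph (A m) (B m))"
  proof -
    have "(\<Prod>j\<in>{1..N}. pph (A j) (B j)) = (\<Prod>j\<in>{1..N} \<inter> {m, m+1}. pph (A j) (B j))"
      by (rule prod.mono_neutral_right) (auto simp: out)
    also have "{1..N} \<inter> {m, m+1} = (if m + 1 \<le> N then {m, m+1} else {m})"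
      using assms by (auto simp: N_def)
    finally show ?thesis by simp
  qed
  have pst: "pstring N (\<lambda>j. pmul (A j) (B j)) = pstring N P"
    unfolding pstring_def P_def by (intro ext prod.cong) (auto simp: out)
  have eq: "op_mult N (op_scale \<i> (W n k (m+1))) (W n k m) x y = s * pstring N P x y" for x y
  proof -
    have "op_mult N (op_scale \<i> (W n k (m+1))) (W n k m) x y
      = (\<i> * Wsign n k (m+1) * Wsign n k m) * op_mult N (pstring N A) (pstring N B) x y"
      unfolding op_mult_def W_def op_scale_def A_def B_def N_def
      by (simp add: sum_distrib_left mult_ac)
    then show ?thesis by (simp only: mult_pstring prodph pst s_def mult.assoc)
  qed
  have s: "s = 1 \<or> s = -1"
    using assms unfolding s_def A_def B_def N_def Wstr_def Wsign_def
    by (auto split: if_splits)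
  show ?thesis
    by (rule exI[of _ P], rule exI[of _ s]) (use s eq in \<open>auto simp: P_def N_def\<close>)
qed

end
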